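(* Let $t\ge2$, let $p\ge5$ be a prime, and let $M,N$ be positive integers, $0\le j\le p-1$ and $0\le k\le M-1\le N-1$. Then $$\alpha_t(p,N,j,k)=\alpha_t(p,M,j,k).$$
   Context: $(q)_n=\prod_{k=1}^n(1-q^k)$, $\binom{n}{k}_q=\frac{(q)_n}{(q)_{n-k}(q)_k}$ (zero unless $0\le k\le n$). For $t\ge2$ let $m(t)=2^{t-1}$; $h''(t)=(2^t-1)/3$, $h'(t)=(2^t-4)/3$, $a(t)=(2^{t-1}+1)/3$ if $t$ is even, and $h''(t)=(2^t-2)/3$, $h'(t)=(2^t-5)/3$, $a(t)=(2^t+1)/3$ if $t$ is odd. For an integer $L\ge0$ define the truncation $$\mathscr{F}_t(q;L)=(-1)^{h''(t)}q^{-h'(t)}\sum_{n=0}^{L}(q)_n\sum_{(j_1,\dots,j_{m(t)-1})}q^{\frac{-a(t)+\sum_{\ell}\ell j_\ell}{m(t)}+\sum_{\ell}\binom{j_\ell}{2}}\sum_{k=0}^{m(t)-1}\prod_{\ell=1}^{m(t)-1}\binom{n+I(\ell\le k)}{j_\ell}_q,$$ the middle sum over tuples of nonnegative integers with $3\sum_{\ell=1}^{m(t)-1}\ell j_\ell\equiv1\pmod{m(t)}$ and $I(\ell\le k)=1$ if $\ell\le k$, else $0$; it is a Laurent polynomial in $q$ with integer coefficients. Its $p$-dissection is the unique representation $\mathscr{F}_t(q;L)=\sum_{i=0}^{p-1}q^i\mathcal{A}_{p,t}(L,i,q^p)$ with Laurent polynomials $\mathcal{A}_{p,t}(L,i,x)\in\mathbb{Z}[x,x^{-1}]$.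 For $n\ge1$ define $\alpha_t(p,n,i,k)$ by the power series expansion $\mathcal{A}_{p,t}(pn-1,i,1-q)=\sum_{k\ge0}\alpha_t(p,n,i,k)q^k$. *)

theory Defs
  imports "HOL-Computational_Algebra.Formal_Laurent_Series"
begin

text \<open>All Laurent polynomials in q are modelled as formal Laurent series over the rationals
  (q = fls_X). Their coefficients are integers, but working over a field lets us write the
  q-binomial coefficient literally as the quotient of q-Pochhammer symbols.\<close>

definition qpoch :: "nat \<Rightarrow> rat fls" where
  "qpoch n = (\<Prod>k=1..n. 1 - fls_X ^ k)"

definition qbinom :: "nat \<Rightarrow> nat \<Rightarrow> rat fls" where
  "qbinom n k = (if k \<le> n then qpoch n / (qpoch (n - k) * qpoch k) else 0)"

definition mt :: "nat \<Rightarrow> nat" where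
  "mt t = 2 ^ (t - 1)"

definition hpp :: "nat \<Rightarrow> int" where
  "hpp t = (if even t then (2 ^ t - 1) div 3 else (2 ^ t - 2) div 3)"

definition hp :: "nat \<Rightarrow> int" where
  "hp t = (if even t then (2 ^ t - 4) div 3 else (2 ^ t - 5) div 3)"

definition aa :: "nat \<Rightarrow> int" where
  "aa t = (if even t then (2 ^ (t - 1) + 1) div 3 else (2 ^ t + 1) div 3)"

text \<open>Entries larger than n+1 contribute zero terms
  (all q-binomials with top n or n+1 vanish), so they are omitted.\<close>
definition tuples :: "nat \<Rightarrow> nat \<Rightarrow> (nat \<Rightarrow> nat) set" where
  "tuples t n = {j \<in> {1..mt t - 1} \<rightarrow>\<^sub>E {0..n+1}.
                   (3 * (\<Sum>l=1..mt t - 1. l * j l)) mod mt t = 1}"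

definition Fterm :: "nat \<Rightarrow> nat \<Rightarrow> (nat \<Rightarrow> nat) \<Rightarrow> rat fls" where
  "Fterm t n j =
     fls_X_intpow ((- aa t + int (\<Sum>l=1..mt t - 1. l * j l)) div int (mt t)
                   + int (\<Sum>l=1..mt t - 1. j l choose 2))
     * (\<Sum>k=0..mt t - 1. \<Prod>l=1..mt t - 1. qbinom (n + (if l \<le> k then 1 else 0)) (j l))"

definition Ftrunc :: "nat \<Rightarrow> nat \<Rightarrow> rat fls" where
  "Ftrunc t L = (-1) ^ nat (hpp t) * fls_X_intpow (- hp t) *
     (\<Sum>n=0..L. qpoch n * (\<Sum>j\<in>tuples t n. Fterm t n j))"

text \<open>p-dissection: coefficient of x^m in A_{p,t}(L,i,x) is the coefficient of q^(pm+i)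
  in F_t(q;L).\<close>
definition dissect_coeff :: "nat \<Rightarrow> nat \<Rightarrow> nat \<Rightarrow> nat \<Rightarrow> int \<Rightarrow> rat" where
  "dissect_coeff p t L i m = fls_nth (Ftrunc t L) (int p * m + int i)"

definition dissect_at_1mq :: "nat \<Rightarrow> nat \<Rightarrow> nat \<Rightarrow> nat \<Rightarrow> rat fls" where
  "dissect_at_1mq p t L i =
     (\<Sum>m\<in>{m. dissect_coeff p t L i m \<noteq> 0}.
        fls_const (dissect_coeff p t L i m) * (1 - fls_X) powi m)"

definition alpha :: "nat \<Rightarrow> nat \<Rightarrow> nat \<Rightarrow> nat \<Rightarrow> nat \<Rightarrow> rat" where
  "alpha t p n i k = fls_nth (dissect_at_1mq p t (p * n - 1) i) (int k)"

end

theory Submission imports Defs begin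
unbundle fps_syntax

definition ub :: "rat fls \<Rightarrow> bool" where "ub F \<longleftrightarrow> (\<exists>b. \<forall>n>b. F $$ n = 0)"

lemma ub_finite: "ub F \<Longrightarrow> finite {n. F $$ n \<noteq> 0}"
proof -
  assume "ub F" then obtain b where b: "\<forall>n>b. F $$ n = 0" unfolding ub_def by blast
  have "{n. F $$ n \<noteq> 0} \<subseteq> {fls_subdegree F..b}"
    using b fls_eq0_below_subdegree[of _ F] by (auto simp: not_less[symmetric])
  then show ?thesis by (rule finite_subset) simp
qed

lemma ub_add: "ub F \<Longrightarrow> ub G \<Longrightarrow> ub (F + G)"
  unfolding ub_def by (metis fls_plus_nth add_0 max.strict_boundedE)

lemma ub_diff: "ub F \<Longrightarrow> ub G \<Longrightarrow> ub (F - G)"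
  unfolding ub_def by (metis fls_minus_nth diff_0 diff_self max.strict_boundedE)

lemma ub_mult: "ub F \<Longrightarrow> ub G \<Longrightarrow> ub (F * G)"
proof -
  assume "ub F" "ub G"
  then obtain a b where a: "\<forall>n>a. F $$ n = 0" and b: "\<forall>n>b. G $$ n = 0" unfolding ub_def by blast
  have "\<forall>n>a+b. (F*G) $$ n = 0"
  proof (intro allI impI)
    fix n assume n: "n > a + b"
    show "(F*G) $$ n = 0" unfolding fls_times_nth(2)
    proof (rule sum.neutral, intro ballI)
      fix i show "F $$ i * G $$ (n - i) = 0"
        using a b n by (cases "i > a") auto
    qed
  qed
  then show ?thesis unfolding ub_def by blast
qed

lemma ub_const: "ub (fls_const c)"
  unfolding ub_def by (rule exI[of _ 0]) auto

lemma ub_one: "ub 1" unfolding ub_def by (rule exI[of _ 0]) auto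
lemma ub_zero: "ub 0" unfolding ub_def by auto

lemma ub_Xpow: "ub (fls_X ^ k)" unfolding ub_def by (rule exI[of _ "int k"]) auto

lemma ub_X: "ub fls_X" using ub_Xpow[of 1] by simp

lemma ub_Xintpow: "ub (fls_X_intpow i)" unfolding ub_def by (rule exI[of _ "i"]) auto

lemma ub_uminus: "ub F \<Longrightarrow> ub (- F)"
  unfolding ub_def by auto

lemma ub_neg1pow: "ub ((-1) ^ k)"
  by (induction k) (auto intro: ub_uminus ub_one)

lemma ub_sum: "(\<And>x. x \<in> A \<Longrightarrow> ub (f x)) \<Longrightarrow> ub (\<Sum>x\<in>A. f x)"
  by (induction A rule: infinite_finite_induct) (auto intro: ub_add ub_zero)

lemma ub_prod: "(\<And>x. x \<in> A \<Longrightarrow> ub (f x)) \<Longrightarrow> ub (\<Prod>x\<in>A. f x)"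
  by (induction A rule: infinite_finite_induct) (auto intro: ub_mult ub_one)

lemma qpoch_Suc: "qpoch (Suc n) = qpoch n * (1 - fls_X ^ Suc n)"
  unfolding qpoch_def by (simp add: prod.cl_ivl_Suc)

lemma one_minus_Xpow_nz: "k > 0 \<Longrightarrow> (1 - fls_X ^ k :: rat fls) \<noteq> 0"
proof
  assume "k > 0" "(1 - fls_X ^ k :: rat fls) = 0"
  then have "(1 - fls_X ^ k :: rat fls) $$ 0 = 0" by simp
  with \<open>k>0\<close> show False by simp
qed

lemma qpoch_nz: "qpoch n \<noteq> 0"
proof (induction n)
  case 0 then show ?case by (simp add: qpoch_def)
next
  case (Suc n) then show ?case using one_minus_Xpow_nz[of "Suc n"] by (simp only: qpoch_Suc mult_eq_0_iff) simp
qed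

lemma qpoch_0: "qpoch 0 = 1" by (simp add: qpoch_def)

lemma ub_qpoch: "ub (qpoch n)"
  unfolding qpoch_def by (intro ub_prod ub_diff ub_one ub_Xpow)

lemma qbinom_0: "qbinom n 0 = 1"
  using qpoch_nz[of n] by (simp add: qbinom_def qpoch_0)

lemma field_pascal:
  fixes A B c x y :: "'a::field"
  assumes "A \<noteq> 0" "B \<noteq> 0" "1 - x \<noteq> 0" "1 - y \<noteq> 0"
  shows "c * (1 - x*y) / ((A * (1 - y)) * (B * (1 - x))) = c / ((A * (1 - y)) * B) + x * (c / (A * (B * (1 - x))))"
proof -
  have d: "(A * (1 - y)) * (B * (1 - x)) \<noteq> 0" using assms by simp
  have "c / ((A * (1 - y)) * B) = c * (1 - x) / ((A * (1 - y)) * (B * (1 - x)))" using assms by simp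
  moreover have "x * (c / (A * (B * (1 - x)))) = x * c * (1 - y) / ((A * (1 - y)) * (B * (1 - x)))" using assms by (simp add: ac_simps)
  moreover have "c * (1 - x) + x * c * (1 - y) = c * (1 - x*y)" by (simp add: algebra_simps)
  ultimately show ?thesis by (metis add_divide_distrib)
qed

lemma qbinom_Suc: "qbinom (Suc n) (Suc k) = qbinom n k + fls_X ^ Suc k * qbinom n (Suc k)"
proof (cases "k < n")
  case True
  then obtain d where d: "n = Suc (k + d)" by (metis less_imp_Suc_add add_Suc)
  have e1: "n - k = Suc d" "n - Suc k = d" "Suc n - Suc k = Suc d" using d by auto
  define x :: "rat fls" where "x = fls_X ^ Suc k"
  define y :: "rat fls" where "y = fls_X ^ Suc d"
  have q1: "qpoch (Suc n) = qpoch n * (1 - x * y)"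
    unfolding qpoch_Suc x_def y_def power_add[symmetric] using d by simp
  have "qbinom (Suc n) (Suc k) = qpoch n * (1 - x*y) / ((qpoch d * (1 - y)) * (qpoch k * (1 - x)))"
    unfolding qbinom_def e1 q1 using True by (simp add: qpoch_Suc x_def y_def)
  also have "\<dots> = qpoch n / ((qpoch d * (1 - y)) * qpoch k) + x * (qpoch n / (qpoch d * (qpoch k * (1 - x))))"
    using one_minus_Xpow_nz[of "Suc k"] one_minus_Xpow_nz[of "Suc d"] qpoch_nz[of d] qpoch_nz[of k]
    unfolding x_def y_def by (intro field_pascal) auto
  also have "\<dots> = qbinom n k + fls_X ^ Suc k * qbinom n (Suc k)"
    unfolding qbinom_def e1 using True by (simp add: qpoch_Suc x_def y_def)
  finally show ?thesis .
next
  case False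
  then show ?thesis
    by (cases "k = n") (auto simp: qbinom_def qpoch_nz)
qed

lemma ub_qbinom: "ub (qbinom n k)"
proof (induction n arbitrary: k)
  case 0
  then show ?case by (cases k) (auto simp: qbinom_0 ub_one qbinom_def ub_zero qpoch_0)
next
  case (Suc n)
  show ?case
  proof (cases k)
    case 0 then show ?thesis by (simp add: qbinom_0 ub_one)
  next
    case (Suc k') then show ?thesis unfolding \<open>k = Suc k'\<close> qbinom_Suc by (intro ub_add ub_mult ub_Xpow Suc.IH)
  qed
qed

lemma ub_Fterm: "ub (Fterm t n j)"
  unfolding Fterm_def by (intro ub_mult ub_Xintpow ub_sum ub_prod ub_qbinom)

lemma ub_Ftrunc: "ub (Ftrunc t L)"
  unfolding Ftrunc_def by (intro ub_mult ub_Xintpow ub_sum ub_qpoch ub_Fterm ub_neg1pow)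


definition PP :: "(int \<Rightarrow> rat) \<Rightarrow> rat fls" where
  "PP c = (\<Sum>m\<in>{m. c m \<noteq> 0}. fls_const (c m) * (1 - fls_X) powi m)"

lemma PP_eq:
  assumes "finite S" "{m. c m \<noteq> 0} \<subseteq> S"
  shows "PP c = (\<Sum>m\<in>S. fls_const (c m) * (1 - fls_X) powi m)"
  unfolding PP_def
  by (rule sum.mono_neutral_left) (use assms in \<open>auto intro: finite_subset\<close>)

lemma PP_diff:
  assumes "finite {m. c m \<noteq> 0}" "finite {m. d m \<noteq> 0}"
  shows "PP (\<lambda>m. c m - d m) = PP c - PP d"
proof -
  let ?S = "{m. c m \<noteq> 0} \<union> {m. d m \<noteq> 0}"
  have f: "finite ?S" using assms by simp
  have "PP (\<lambda>m. c m - d m) = (\<Sum>m\<in>?S. fls_const (c m - d m) * (1 - fls_X) powi m)"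
    by (rule PP_eq[OF f]) auto
  also have "\<dots> = (\<Sum>m\<in>?S. fls_const (c m) * (1 - fls_X) powi m) - (\<Sum>m\<in>?S. fls_const (d m) * (1 - fls_X) powi m)"
    by (simp add: sum_subtractf[symmetric] fls_minus_const[symmetric] left_diff_distrib)
  also have "\<dots> = PP c - PP d"
    by (simp add: PP_eq[OF f])
  finally show ?thesis .
qed

lemma one_minus_X_nz: "(1 - fls_X :: rat fls) \<noteq> 0"
  using one_minus_Xpow_nz[of 1] by simp

lemma PP_shift:
  assumes "finite {m. c m \<noteq> 0}"
  shows "PP (\<lambda>m. c (m - 1)) = (1 - fls_X) * PP c"
proof -
  let ?S = "{m. c m \<noteq> 0}"
  have eqS: "{m. c (m - 1) \<noteq> 0} = (\<lambda>m. m + 1) ` ?S"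
    by (auto simp: image_iff) (metis diff_add_cancel)
  have "PP (\<lambda>m. c (m - 1)) = (\<Sum>m\<in>(\<lambda>m. m + 1) ` ?S. fls_const (c (m - 1)) * (1 - fls_X) powi m)"
    unfolding PP_def eqS ..
  also have "\<dots> = (\<Sum>m\<in>?S. fls_const (c m) * (1 - fls_X) powi (m + 1))"
    by (subst sum.reindex) (auto simp: inj_on_def)
  also have "\<dots> = (\<Sum>m\<in>?S. (1 - fls_X) * (fls_const (c m) * (1 - fls_X) powi m))"
    using one_minus_X_nz by (simp add: power_int_add_1 ac_simps)
  also have "\<dots> = (1 - fls_X) * PP c"
    unfolding PP_def by (simp add: sum_distrib_left)
  finally show ?thesis .
qed

lemma PP_delta:
  assumes "finite {m. c m \<noteq> 0}"
  shows "PP (\<lambda>m. c m - c (m - 1)) = fls_X * PP c"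
proof -
  have f2: "finite {m. c (m - 1) \<noteq> 0}"
  proof -
    have "{m. c (m - 1) \<noteq> 0} = (\<lambda>m. m + 1) ` {m. c m \<noteq> 0}"
      by (auto simp: image_iff) (metis diff_add_cancel)
    then show ?thesis using assms by simp
  qed
  have "PP (\<lambda>m. c m - c (m - 1)) = PP c - (1 - fls_X) * PP c"
    using PP_diff[OF assms f2] PP_shift[OF assms] by simp
  also have "\<dots> = fls_X * PP c" by (simp add: algebra_simps)
  finally show ?thesis .
qed

lemma subdeg_1mX: "fls_subdegree (1 - fls_X :: rat fls) = 0"
  by (rule fls_subdegree_eqI) auto

lemma PP_neg: "n < 0 \<Longrightarrow> PP c $$ n = 0"
  unfolding PP_def fls_nth_sum
  by (intro sum.neutral ballI) (simp add: subdeg_1mX)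

definition cf :: "nat \<Rightarrow> nat \<Rightarrow> rat fls \<Rightarrow> int \<Rightarrow> rat" where
  "cf p i F m = F $$ (int p * m + int i)"

lemma cf_finite:
  assumes "p > 0" "ub F"
  shows "finite {m. cf p i F m \<noteq> 0}"
proof -
  have "{m. cf p i F m \<noteq> 0} = (\<lambda>m. int p * m + int i) -` {n. F $$ n \<noteq> 0}"
    by (auto simp: cf_def)
  moreover have "inj (\<lambda>m. int p * m + int i)" using assms(1) by (auto simp: inj_def)
  ultimately show ?thesis using finite_vimageI[OF ub_finite[OF assms(2)]] by simp
qed

lemma cf_step: "cf p i ((1 - fls_X ^ p) * H) m = cf p i H m - cf p i H (m - 1)"
proof -
  have "((1 - fls_X ^ p) * H) = H - fls_shift (- int p) H"
    by (simp add: left_diff_distrib fls_X_power_times_conv_shift)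
  moreover have "H $$ (int p * (m - 1) + int i) = H $$ (int p * m + int i - int p)"
    by (simp add: algebra_simps)
  ultimately show ?thesis by (simp add: cf_def)
qed

lemma ub_power: "ub F \<Longrightarrow> ub (F ^ n)"
  by (induction n) (auto intro: ub_mult ub_one)

lemma ub_1mXp: "ub (1 - fls_X ^ p)" by (intro ub_diff ub_one ub_Xpow)

lemma PP_main:
  assumes "p > 0" "ub G"
  shows "PP (cf p i ((1 - fls_X ^ p) ^ M * G)) = fls_X ^ M * PP (cf p i G)"
proof (induction M)
  case 0 then show ?case by simp
next
  case (Suc M)
  let ?H = "(1 - fls_X ^ p) ^ M * G"
  have ubH: "ub ?H" by (intro ub_mult ub_power assms(2) ub_1mXp)
  have "PP (cf p i ((1 - fls_X ^ p) ^ Suc M * G)) = PP (cf p i ((1 - fls_X ^ p) * ?H))"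
    by (simp add: mult.assoc)
  also have "\<dots> = PP (\<lambda>m. cf p i ?H m - cf p i ?H (m - 1))"
    by (rule arg_cong[where f=PP], rule ext, rule cf_step)
  also have "\<dots> = fls_X * PP (cf p i ?H)"
    by (rule PP_delta[OF cf_finite[OF assms(1) ubH]])
  finally show ?case using Suc.IH by simp
qed


lemma qpoch_factor:
  assumes "p > 0"
  shows "\<exists>R. ub R \<and> qpoch n = (1 - fls_X ^ p) ^ (n div p) * R"
proof (induction n)
  case 0 then show ?case by (intro exI[of _ 1]) (simp add: qpoch_0 ub_one)
next
  case (Suc n)
  then obtain R where R: "ub R" "qpoch n = (1 - fls_X ^ p) ^ (n div p) * R" by blast
  show ?case
  proof (cases "Suc n mod p = 0")
    case True
    then obtain q where q: "Suc n = p * q" by auto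
    have dv: "Suc n div p = Suc (n div p)" using True by (simp add: div_Suc)
    have "(1 - fls_X ^ Suc n :: rat fls) = 1 - (fls_X ^ p) ^ q" by (simp add: q power_mult)
    also have "\<dots> = (1 - fls_X ^ p) * (\<Sum>i<q. (fls_X ^ p) ^ i)" by (rule one_diff_power_eq)
    finally have e: "(1 - fls_X ^ Suc n :: rat fls) = (1 - fls_X ^ p) * (\<Sum>i<q. (fls_X ^ p) ^ i)" .
    show ?thesis
      by (intro exI[of _ "R * (\<Sum>i<q. (fls_X ^ p) ^ i)"] conjI ub_mult R(1) ub_sum ub_power ub_Xpow ub_X)
         (unfold qpoch_Suc R(2) e dv, unfold power_Suc, simp only: ac_simps)
  next
    case False
    have dv: "Suc n div p = n div p" using False by (simp add: div_Suc)
    show ?thesis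
      by (intro exI[of _ "R * (1 - fls_X ^ Suc n)"] conjI ub_mult R(1) ub_diff ub_one ub_Xpow)
         (simp add: qpoch_Suc R(2) dv ac_simps)
  qed
qed

lemma qpoch_factor_M:
  assumes "p > 0" "p * M \<le> n"
  shows "\<exists>R. ub R \<and> qpoch n = (1 - fls_X ^ p) ^ M * R"
proof -
  obtain R where R: "ub R" "qpoch n = (1 - fls_X ^ p) ^ (n div p) * R"
    using qpoch_factor[OF assms(1)] by blast
  have "M \<le> n div p" using assms
    by (metis div_le_mono nonzero_mult_div_cancel_left not_gr0)
  then have "(1 - fls_X ^ p :: rat fls) ^ (n div p) = (1 - fls_X ^ p) ^ M * (1 - fls_X ^ p) ^ (n div p - M)"
    by (simp add: power_add[symmetric])
  then show ?thesis using R
    by (intro exI[of _ "(1 - fls_X ^ p) ^ (n div p - M) * R"] conjI ub_mult ub_power ub_1mXp)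
       (auto simp: ac_simps)
qed

lemma sum_factor:
  assumes "p > 0" "finite A" "\<forall>n\<in>A. p * M \<le> n" "\<forall>n\<in>A. ub (S n)"
  shows "\<exists>G. ub G \<and> (\<Sum>n\<in>A. qpoch n * S n) = (1 - fls_X ^ p) ^ M * G"
  using assms(2-4)
proof (induction A rule: finite_induct)
  case empty then show ?case by (intro exI[of _ 0]) (simp add: ub_zero)
next
  case (insert x A)
  then obtain G where G: "ub G" "(\<Sum>n\<in>A. qpoch n * S n) = (1 - fls_X ^ p) ^ M * G" by auto
  obtain R where R: "ub R" "qpoch x = (1 - fls_X ^ p) ^ M * R"
    using qpoch_factor_M[OF assms(1)] insert.prems by blast
  show ?case
    using insert.hyps insert.prems
    by (intro exI[of _ "R * S x + G"] conjI ub_add ub_mult R(1) G(1))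
       (auto simp: G(2) R(2) algebra_simps)
qed

lemma dissect_PP: "dissect_at_1mq p t L i = PP (cf p i (Ftrunc t L))"
  by (simp add: dissect_at_1mq_def PP_def cf_def dissect_coeff_def)

theorem lemma4p4:
  fixes t p M N j k :: nat
  assumes "t \<ge> 2" and "prime p" and "p \<ge> 5"
    and "M > 0" and "N > 0" and "j \<le> p - 1"
    and "k \<le> M - 1" and "M - 1 \<le> N - 1"
  shows "alpha t p N j k = alpha t p M j k"
proof -
  have p0: "p > 0" using assms(3) by simp
  have MN: "M \<le> N" using assms(4,5,8) by simp
  define S where "S n = (\<Sum>j\<in>tuples t n. Fterm t n j)" for n
  define W where "W = ((-1) ^ nat (hpp t) * fls_X_intpow (- hp t) :: rat fls)"
  have FT: "Ftrunc t L = W * (\<Sum>n=0..L. qpoch n * S n)" for L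
    unfolding Ftrunc_def W_def S_def by simp
  have pM: "p * M \<ge> 1" "p * M \<le> p * N" using p0 assms(4) MN by auto
  have le: "p*M - 1 \<le> p*N - 1" using diff_le_mono[OF mult_le_mono2[OF MN]] by blast
  have split: "{0..p*N-1} = {0..p*M-1} \<union> {p*M..p*N-1}"
    apply (rule set_eqI) using le pM(1) by (simp only: atLeastAtMost_iff Un_iff) linarith
  have "(\<Sum>n=0..p*N-1. qpoch n * S n) = (\<Sum>n=0..p*M-1. qpoch n * S n) + (\<Sum>n=p*M..p*N-1. qpoch n * S n)"
  proof -
    have d: "{0..p*M-1} \<inter> {p*M..p*N-1} = {}"
    proof -
      { fix x assume "x \<le> p*M-1" "p*M \<le> x" hence False using pM(1) by linarith }
      thus ?thesis by auto
    qed
    show ?thesis unfolding split by (rule sum.union_disjoint[OF _ _ d]) auto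
  qed
  moreover have ubS: "ub (S n)" for n unfolding S_def by (intro ub_sum ub_Fterm)
  have "\<exists>G. ub G \<and> (\<Sum>n=p*M..p*N-1. qpoch n * S n) = (1 - fls_X ^ p) ^ M * G"
    by (rule sum_factor[OF p0]) (simp_all add: ubS)
  then obtain G where G: "ub G" "(\<Sum>n=p*M..p*N-1. qpoch n * S n) = (1 - fls_X ^ p) ^ M * G"
    by blast
  ultimately have D: "Ftrunc t (p*N-1) - Ftrunc t (p*M-1) = (1 - fls_X ^ p) ^ M * (W * G)"
    unfolding FT by (simp add: algebra_simps)
  have ubW: "ub W" unfolding W_def by (intro ub_mult ub_neg1pow ub_Xintpow)
  have "alpha t p N j k - alpha t p M j k
        = (PP (cf p j (Ftrunc t (p*N-1))) - PP (cf p j (Ftrunc t (p*M-1)))) $$ int k"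
    by (simp add: alpha_def dissect_PP)
  also have "PP (cf p j (Ftrunc t (p*N-1))) - PP (cf p j (Ftrunc t (p*M-1)))
       = PP (\<lambda>m. cf p j (Ftrunc t (p*N-1)) m - cf p j (Ftrunc t (p*M-1)) m)"
    by (rule PP_diff[symmetric]) (intro cf_finite p0 ub_Ftrunc)+
  also have "(\<lambda>m. cf p j (Ftrunc t (p*N-1)) m - cf p j (Ftrunc t (p*M-1)) m)
       = cf p j (Ftrunc t (p*N-1) - Ftrunc t (p*M-1))"
    by (auto simp: cf_def)
  also have "PP (cf p j (Ftrunc t (p*N-1) - Ftrunc t (p*M-1))) = fls_X ^ M * PP (cf p j (W * G))"
    unfolding D by (rule PP_main[OF p0]) (intro ub_mult ubW G(1))
  also have "(fls_X ^ M * PP (cf p j (W * G))) $$ int k = 0"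
    using assms(4,7) by (simp add: fls_X_power_times_conv_shift PP_neg)
  finally show ?thesis by simp
qed

end
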